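(* Let $\Gamma$ be a complete dominance graph on vertex set $\{1,\dots,n\}$ and let $L=D-A$ be its graph Laplacian. Let $V$ be the $n\times n$ matrix whose $i$th column is $\mathbf{v}_i=\sum_{k=1}^{i}\mathbf{e}_k$ (with $\mathbf{e}_k$ the standard basis vectors of $\mathbb{R}^n$). Then $V^{-1}$ is the upper bidiagonal matrix with all diagonal entries equal to $1$, all superdiagonal entries equal to $-1$, and all other entries $0$. Moreover, there exists a permutation matrix $P$ such that, for each $i=1,\dots,n$, the $i$th row of $V^{-1}$ is a left eigenvector of $P^TLP$ for the eigenvalue $n-i$.
   Context: For a weighted digraph with weights $w_{ij}\ge 0$, $d^{+}(i)=\sum_j w_{ij}$, $D=\mathrm{diag}(d^{+}(1),\dots,d^{+}(n))$, $A=[w_{ij}]$, $L=D-A$. A complete dominance graph is an acyclic tournament (for each pair of distinct vertices exactly one of $(i,j),(j,i)$ is an edge) in which every edge has weight $1$. A left eigenvector $\mathbf{w}$ of a matrix $M$ for eigenvalue $\lambda$ is a nonzero vector with $\mathbf{w}^{*}M=\lambda\mathbf{w}^{*}$. *)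

theory Defs
  imports "Jordan_Normal_Form.Matrix" "HOL-Combinatorics.Permutations"
begin

(* Vertices are 0,...,n-1 (0-based version of {1,...,n}); a digraph is an edge set. *)

definition complete_dominance_graph :: "nat \<Rightarrow> (nat \<times> nat) set \<Rightarrow> bool" where
  "complete_dominance_graph n G \<longleftrightarrow>
     G \<subseteq> {..<n} \<times> {..<n} \<and>
     (\<forall>i<n. \<forall>j<n. i \<noteq> j \<longrightarrow> ((i,j) \<in> G \<longleftrightarrow> (j,i) \<notin> G)) \<and>
     (\<forall>i<n. (i,i) \<notin> G) \<and>
     acyclic G"

definition dom_adj :: "nat \<Rightarrow> (nat \<times> nat) set \<Rightarrow> real mat" where
  "dom_adj n G = mat n n (\<lambda>(i,j). if (i,j) \<in> G then 1 else 0)"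

definition out_deg :: "real mat \<Rightarrow> nat \<Rightarrow> real" where
  "out_deg A i = (\<Sum>j<dim_col A. A $$ (i,j))"

definition laplacian :: "real mat \<Rightarrow> real mat" where
  "laplacian A = mat (dim_row A) (dim_col A) (\<lambda>(i,j). if i = j then out_deg A i else 0) - A"

definition permutation_mat :: "nat \<Rightarrow> real mat \<Rightarrow> bool" where
  "permutation_mat n P \<longleftrightarrow>
     (\<exists>p. p permutes {..<n} \<and> P = mat n n (\<lambda>(i,j). if i = p j then 1 else 0))"

(* w is a left eigenvector of M for k:  w nonzero and w^* M = k w^*  (real entries, so w^* = w^T) *)
definition left_eigenvector :: "real mat \<Rightarrow> real vec \<Rightarrow> real \<Rightarrow> bool" where
  "left_eigenvector M w k \<longleftrightarrow>
     w \<in> carrier_vec (dim_row M) \<and> w \<noteq> 0\<^sub>v (dim_row M) \<and>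
     vec (dim_col M) (\<lambda>j. w \<bullet> col M j) = k \<cdot>\<^sub>v w"

end

theory Submission
  imports Defs
begin

lemma cdg_parts:
  assumes "complete_dominance_graph n G"
  shows "G \<subseteq> {..<n} \<times> {..<n}"
    and "\<forall>i<n. \<forall>j<n. i \<noteq> j \<longrightarrow> ((i,j) \<in> G \<longleftrightarrow> (j,i) \<notin> G)"
    and "\<forall>i<n. (i,i) \<notin> G"
    and "acyclic G"
proof -
  have cdg: "G \<subseteq> {..<n} \<times> {..<n} \<and>
     (\<forall>i<n. \<forall>j<n. i \<noteq> j \<longrightarrow> ((i,j) \<in> G \<longleftrightarrow> (j,i) \<notin> G)) \<and>
     (\<forall>i<n. (i,i) \<notin> G) \<and> acyclic G"
    using assms unfolding complete_dominance_graph_def .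
  show "G \<subseteq> {..<n} \<times> {..<n}" using cdg by (rule conjunct1)
  show "\<forall>i<n. \<forall>j<n. i \<noteq> j \<longrightarrow> ((i,j) \<in> G \<longleftrightarrow> (j,i) \<notin> G)"
    using conjunct2[OF cdg] by (rule conjunct1)
  show "\<forall>i<n. (i,i) \<notin> G" using conjunct2[OF conjunct2[OF cdg]] by (rule conjunct1)
  show "acyclic G" using conjunct2[OF conjunct2[OF cdg]] by (rule conjunct2)
qed

lemma cdg_trans:
  assumes "complete_dominance_graph n G" "(a,b) \<in> G" "(b,c) \<in> G"
  shows "(a,c) \<in> G"
proof -
  note sub = cdg_parts(1)[OF assms(1)] and tour = cdg_parts(2)[OF assms(1)]
    and ac = cdg_parts(4)[OF assms(1)]
  have abc: "a < n" "b < n" "c < n" using subsetD[OF sub assms(2)] subsetD[OF sub assms(3)] by simp_all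
  have "a \<noteq> c"
  proof
    assume "a = c"
    then have "(b,a) \<in> G" using assms(3) by simp
    then have "(a,a) \<in> G\<^sup>+" by (rule trancl_into_trancl[OF r_into_trancl[OF assms(2)]])
    then show False using ac by (simp add: acyclic_def)
  qed
  moreover have "(c,a) \<notin> G"
  proof
    assume "(c,a) \<in> G"
    then have "(a,a) \<in> G\<^sup>+"
      by (rule trancl_into_trancl[OF trancl_into_trancl[OF r_into_trancl[OF assms(2)] assms(3)]])
    then show False using ac by (simp add: acyclic_def)
  qed
  moreover have "(a,c) \<in> G \<longleftrightarrow> (c,a) \<notin> G" if "a \<noteq> c" using tour[rule_format, OF abc(1) abc(3) that] .
  ultimately show ?thesis by simp
qed

definition odeg :: "nat \<Rightarrow> (nat \<times> nat) set \<Rightarrow> nat \<Rightarrow> nat" where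
  "odeg n G v = card {u. u < n \<and> (v,u) \<in> G}"

lemma odeg_less:
  assumes "complete_dominance_graph n G" "(v,u) \<in> G"
  shows "odeg n G u < odeg n G v"
proof -
  note sub = cdg_parts(1)[OF assms(1)] and irr = cdg_parts(3)[OF assms(1)]
  have "u < n" using sub assms(2) by auto
  have "{w. w < n \<and> (u,w) \<in> G} \<subset> {w. w < n \<and> (v,w) \<in> G}"
  proof
    show "{w. w < n \<and> (u,w) \<in> G} \<subseteq> {w. w < n \<and> (v,w) \<in> G}"
      using cdg_trans[OF assms(1) assms(2)] by auto
    show "{w. w < n \<and> (u,w) \<in> G} \<noteq> {w. w < n \<and> (v,w) \<in> G}"
      using \<open>u < n\<close> irr assms(2) by auto
  qed
  then show ?thesis unfolding odeg_def by (intro psubset_card_mono) auto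
qed

lemma odeg_iff:
  assumes "complete_dominance_graph n G" "u < n" "v < n"
  shows "(v,u) \<in> G \<longleftrightarrow> odeg n G u < odeg n G v"
proof -
  note tour = cdg_parts(2)[OF assms(1)]
  show ?thesis
  proof
    assume "(v,u) \<in> G" then show "odeg n G u < odeg n G v" using odeg_less assms by blast
  next
    assume h: "odeg n G u < odeg n G v"
    then have "u \<noteq> v" by auto
    show "(v,u) \<in> G"
    proof (rule ccontr)
      assume "(v,u) \<notin> G"
      then have "(u,v) \<in> G" using tour[rule_format, OF assms(2) assms(3) \<open>u \<noteq> v\<close>] \<open>(v,u) \<notin> G\<close> by blast
      then show False using odeg_less[OF assms(1)] h by fastforce
    qed
  qed
qed

lemma odeg_bound:
  assumes "complete_dominance_graph n G" "v < n"
  shows "odeg n G v < n"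
proof -
  note irr = cdg_parts(3)[OF assms(1)]
  have "{u. u < n \<and> (v,u) \<in> G} \<subset> {..<n}" using assms irr by auto
  then show ?thesis unfolding odeg_def
    by (metis card_lessThan finite_lessThan psubset_card_mono)
qed

lemma dom_order:
  assumes "complete_dominance_graph n G"
  obtains p where "p permutes {..<n}" "\<And>i j. i < n \<Longrightarrow> j < n \<Longrightarrow> (p i, p j) \<in> G \<longleftrightarrow> i < j"
    "\<And>i. i < n \<Longrightarrow> odeg n G (p i) = n - 1 - i"
proof -
  define q where "q v = (if v < n then n - 1 - odeg n G v else v)" for v
  have inj: "inj_on q {..<n}"
  proof (rule inj_onI)
    fix u v assume "u \<in> {..<n}" "v \<in> {..<n}" "q u = q v"
    moreover have "odeg n G u < n" "odeg n G v < n" using odeg_bound[OF assms] \<open>u \<in> {..<n}\<close> \<open>v \<in> {..<n}\<close> by auto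
    ultimately have "odeg n G u = odeg n G v" using \<open>u \<in> {..<n}\<close> \<open>v \<in> {..<n}\<close> unfolding q_def by auto
    then have eqd: "odeg n G u = odeg n G v" .
    show "u = v"
    proof (rule ccontr)
      assume "u \<noteq> v"
      have tour: "\<forall>i<n. \<forall>j<n. i \<noteq> j \<longrightarrow> ((i,j) \<in> G \<longleftrightarrow> (j,i) \<notin> G)"
        using cdg_parts(2)[OF assms] .
      have "u < n" "v < n" using \<open>u \<in> {..<n}\<close> \<open>v \<in> {..<n}\<close> by simp_all
      then have "(u,v) \<in> G \<longleftrightarrow> (v,u) \<notin> G"
        using tour[rule_format, of u v] \<open>u \<noteq> v\<close> by blast
      then have "(u,v) \<in> G \<or> (v,u) \<in> G" by blast
      then show False
      proof
        assume "(u,v) \<in> G" then show False using odeg_less[OF assms] eqd by fastforce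
      next
        assume "(v,u) \<in> G" then show False using odeg_less[OF assms] eqd by fastforce
      qed
    qed
  qed
  have "q ` {..<n} \<subseteq> {..<n}" unfolding q_def by auto
  then have "q ` {..<n} = {..<n}"
    by (intro endo_inj_surj) (simp_all add: inj)
  then have "bij_betw q {..<n} {..<n}" using inj by (simp add: bij_betw_def)
  then have qp: "q permutes {..<n}" by (rule bij_imp_permutes) (simp add: q_def)
  define p where "p = Hilbert_Choice.inv q"
  have pp: "p permutes {..<n}" unfolding p_def using qp by (rule permutes_inv)
  have qpi: "q (p i) = i" for i unfolding p_def by (rule permutes_inverses(1)[OF qp])
  have dg: "odeg n G (p i) = n - 1 - i" if "i < n" for i
  proof -
    have "p i < n" using pp that permutes_in_image by fastforce
    then have "n - 1 - odeg n G (p i) = i" using qpi[of i] unfolding q_def by simp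
    then show ?thesis using odeg_bound[OF assms \<open>p i < n\<close>] by linarith
  qed
  show ?thesis
  proof (rule that[OF pp _ dg])
    fix i j assume ij: "i < n" "j < n"
    have "p i < n" "p j < n" using pp ij permutes_in_image by fastforce+
    have "(p i, p j) \<in> G \<longleftrightarrow> odeg n G (p j) < odeg n G (p i)"
      by (rule odeg_iff[OF assms \<open>p j < n\<close> \<open>p i < n\<close>])
    also have "\<dots> \<longleftrightarrow> i < j" using dg[OF ij(1)] dg[OF ij(2)] ij by auto
    finally show "(p i, p j) \<in> G \<longleftrightarrow> i < j" .
  qed
qed

theorem proposition3p3:
  fixes n :: nat and G :: "(nat \<times> nat) set"
  assumes "complete_dominance_graph n G"
  defines "L \<equiv> laplacian (dom_adj n G)"
    and "V \<equiv> mat n n (\<lambda>(i,j). if i \<le> j then 1 else 0 :: real)"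
    and "W \<equiv> mat n n (\<lambda>(i,j). if i = j then 1 else if j = i + 1 then -1 else 0 :: real)"
  shows "inverts_mat V W \<and> inverts_mat W V \<and>
         (\<exists>P. permutation_mat n P \<and>
              (\<forall>i<n. left_eigenvector (transpose_mat P * L * P) (row W i) (real (n - (i + 1)))))"
proof -
  note sub = cdg_parts(1)[OF assms(1)] and irr = cdg_parts(3)[OF assms(1)]
  obtain p where pp: "p permutes {..<n}"
    and pG: "\<And>i j. i < n \<Longrightarrow> j < n \<Longrightarrow> (p i, p j) \<in> G \<longleftrightarrow> i < j"
    and pd: "\<And>i. i < n \<Longrightarrow> odeg n G (p i) = n - 1 - i"
    using dom_order[OF assms(1)] by metis
  have pn: "p i < n" if "i < n" for i using pp that permutes_in_image by fastforce
  have Ldim: "dim_row L = n" "dim_col L = n"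
    unfolding L_def laplacian_def dom_adj_def by auto
  have Lent: "L $$ (a,b) = (if a = b then real (odeg n G a) else if (a,b) \<in> G then -1 else 0)"
    if "a < n" "b < n" for a b
  proof -
    have "out_deg (dom_adj n G) a = real (odeg n G a)"
    proof -
      have "out_deg (dom_adj n G) a = (\<Sum>j<n. if (a,j) \<in> G then 1 else 0)"
        unfolding out_deg_def dom_adj_def using that by simp
      also have "\<dots> = real (card ({..<n} \<inter> {j. (a,j) \<in> G}))"
        by (simp add: sum.If_cases)
      also have "{..<n} \<inter> {j. (a,j) \<in> G} = {u. u < n \<and> (a,u) \<in> G}" by auto
      finally show ?thesis unfolding odeg_def .
    qed
    then show ?thesis unfolding L_def laplacian_def dom_adj_def using that irr by auto
  qed
  define P where "P = mat n n (\<lambda>(i,j). if i = p j then 1 else 0 :: real)"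
  define M where "M = transpose_mat P * L * P"
  have Mdim: "dim_row M = n" "dim_col M = n" unfolding M_def P_def using Ldim by auto
  have Ment: "M $$ (i,j) = (if i = j then real (n - 1 - i) else if i < j then -1 else 0)"
    if "i < n" "j < n" for i j
  proof -
    have 1: "(transpose_mat P * L) $$ (i,k) = L $$ (p i, k)" if "k < n" for k
    proof -
      have "(transpose_mat P * L) $$ (i,k) = (\<Sum>l\<in>{0..<n}. (if l = p i then 1 else 0) * L $$ (l,k))"
        using \<open>i < n\<close> that Ldim unfolding P_def by (simp add: scalar_prod_def)
      also have "\<dots> = (\<Sum>l\<in>{0..<n}. if l = p i then L $$ (l,k) else 0)"
        by (rule sum.cong) auto
      also have "\<dots> = L $$ (p i, k)"
        using pn[OF \<open>i < n\<close>] by simp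
      finally show ?thesis .
    qed
    have "M $$ (i,j) = (\<Sum>k\<in>{0..<n}. L $$ (p i, k) * (if k = p j then 1 else 0))"
      unfolding M_def using that Ldim 1 by (simp add: scalar_prod_def P_def)
    also have "\<dots> = (\<Sum>k\<in>{0..<n}. if k = p j then L $$ (p i, k) else 0)"
      by (rule sum.cong) auto
    also have "\<dots> = L $$ (p i, p j)"
      using pn[OF \<open>j < n\<close>] by simp
    also have "\<dots> = (if i = j then real (n - 1 - i) else if i < j then -1 else 0)"
      using Lent[OF pn[OF \<open>i < n\<close>] pn[OF \<open>j < n\<close>]] pG[OF that] pd[OF \<open>i < n\<close>]
        permutes_inj_on[OF pp] that
      by (auto dest: inj_onD)
    finally show ?thesis .
  qed
  have Wr: "(\<Sum>k\<in>{0..<n}. W $$ (i,k) * f k) = f i - (if i + 1 < n then f (i+1) else 0)"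
    if "i < n" for i and f :: "nat \<Rightarrow> real"
  proof -
    have "(\<Sum>k\<in>{0..<n}. W $$ (i,k) * f k) =
          (\<Sum>k\<in>{0..<n}. (if k = i then f k else 0) - (if k = i + 1 then f k else 0))"
      by (rule sum.cong) (auto simp: W_def that)
    also have "\<dots> = f i - (if i + 1 < n then f (i+1) else 0)"
      by (simp add: sum_subtractf that)
    finally show ?thesis .
  qed
  have Wc: "(\<Sum>k\<in>{0..<n}. f k * W $$ (k,j)) = f j - (if 0 < j then f (j-1) else 0)"
    if "j < n" for j and f :: "nat \<Rightarrow> real"
  proof -
    have "(\<Sum>k\<in>{0..<n}. f k * W $$ (k,j)) =
          (\<Sum>k\<in>{0..<n}. (if k = j then f k else 0) - (if 0 < j \<and> k = j - 1 then f k else 0))"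
      by (rule sum.cong) (auto simp: W_def that)
    also have "\<dots> = f j - (if 0 < j then f (j-1) else 0)"
      using that by (simp add: sum_subtractf)
    finally show ?thesis .
  qed
  have VW: "inverts_mat V W"
    unfolding inverts_mat_def
  proof (rule eq_matI)
    fix i j assume ij: "i < dim_row (1\<^sub>m (dim_row V))" "j < dim_col (1\<^sub>m (dim_row V))"
    then have ij': "i < n" "j < n" by (auto simp: V_def)
    have "(V * W) $$ (i,j) = (\<Sum>k\<in>{0..<n}. (if i \<le> k then 1 else 0) * W $$ (k,j))"
      using ij' by (simp add: V_def W_def scalar_prod_def)
    also have "\<dots> = 1\<^sub>m (dim_row V) $$ (i,j)"
      using ij' by (subst Wc) (auto simp: V_def)
    finally show "(V * W) $$ (i,j) = 1\<^sub>m (dim_row V) $$ (i,j)" .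
  qed (auto simp: V_def W_def)
  have WV: "inverts_mat W V"
    unfolding inverts_mat_def
  proof (rule eq_matI)
    fix i j assume ij: "i < dim_row (1\<^sub>m (dim_row W))" "j < dim_col (1\<^sub>m (dim_row W))"
    then have ij': "i < n" "j < n" by (auto simp: W_def)
    have "(W * V) $$ (i,j) = (\<Sum>k\<in>{0..<n}. W $$ (i,k) * (if k \<le> j then 1 else 0))"
      using ij' by (simp add: V_def W_def scalar_prod_def)
    also have "\<dots> = 1\<^sub>m (dim_row W) $$ (i,j)"
      using ij' by (subst Wr) (auto simp: W_def)
    finally show "(W * V) $$ (i,j) = 1\<^sub>m (dim_row W) $$ (i,j)" .
  qed (auto simp: V_def W_def)
  have Wdim: "dim_row W = n" "dim_col W = n" unfolding W_def by auto
  have eig: "left_eigenvector M (row W i) (real (n - (i + 1)))" if "i < n" for i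
    unfolding left_eigenvector_def Mdim
  proof (intro conjI)
    show "row W i \<in> carrier_vec n" using row_carrier[of W i] unfolding Wdim(2) .
    have r1: "row W i $ i = W $$ (i,i)" using that Wdim by simp
    have r2: "W $$ (i,i) = 1" unfolding W_def index_mat(1)[OF that that] prod.case by simp
    show "row W i \<noteq> 0\<^sub>v n"
    proof
      assume "row W i = 0\<^sub>v n"
      then have "row W i $ i = 0" using that by simp
      then show False using r1 r2 by simp
    qed
    show "vec n (\<lambda>j. row W i \<bullet> col M j) = real (n - (i + 1)) \<cdot>\<^sub>v row W i"
    proof (rule eq_vecI)
      fix j assume "j < dim_vec (real (n - (i + 1)) \<cdot>\<^sub>v row W i)"
      then have j: "j < n" using Wdim by simp
      have "row W i \<bullet> col M j = (\<Sum>k\<in>{0..<n}. row W i $ k * col M j $ k)"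
        unfolding scalar_prod_def using Mdim by simp
      also have "\<dots> = (\<Sum>k\<in>{0..<n}. W $$ (i,k) * M $$ (k,j))"
        by (rule sum.cong) (use that j Mdim Wdim in auto)
      also have "\<dots> = M $$ (i,j) - (if i + 1 < n then M $$ (i+1, j) else 0)"
        by (rule Wr[where f="\<lambda>k. M $$ (k,j)", OF that])
      also have "\<dots> = real (n - (i + 1)) * W $$ (i,j)"
      proof -
        have Wij: "W $$ (i,j) = (if i = j then 1 else if j = i + 1 then -1 else 0)"
          unfolding W_def index_mat(1)[OF that j] prod.case by (rule refl)
        have Mn: "M $$ (i+1, j) = (if i + 1 = j then real (n - 1 - (i+1)) else if i + 1 < j then -1 else 0)"
          if "i + 1 < n" using Ment[OF that j] .
        have Mi: "M $$ (i, j) = (if i = j then real (n - 1 - i) else if i < j then -1 else 0)"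
          using Ment[OF \<open>i < n\<close> j] .
        consider "j = i" | "j = i + 1" | "j < i" | "i + 1 < j" by linarith
        then show ?thesis
        proof cases
          case 1
          have a: "M $$ (i,j) = real (n - (i+1))" using Mi 1 by simp
          have b: "(if i + 1 < n then M $$ (i+1, j) else 0) = 0" using Mn 1 by simp
          have c: "W $$ (i,j) = 1" using Wij 1 by simp
          show ?thesis unfolding a b c by simp
        next
          case 2
          then have i1: "i + 1 < n" using j by simp
          have a: "M $$ (i,j) = -1" using Mi 2 by simp
          have b: "(if i + 1 < n then M $$ (i+1, j) else 0) = real (n - 1 - (i+1))"
            using Mn[OF i1] i1 2 by simp
          have c: "W $$ (i,j) = -1" using Wij 2 by simp
          have d: "real (n - 1 - (i+1)) = real (n - (i+1)) - 1"
            using i1 by (simp add: of_nat_diff)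
          show ?thesis unfolding a b c d by simp
        next
          case 3
          have a: "M $$ (i,j) = 0" using Mi 3 by simp
          have b: "(if i + 1 < n then M $$ (i+1, j) else 0) = 0" using Mn 3 by simp
          have c: "W $$ (i,j) = 0" using Wij 3 by simp
          show ?thesis unfolding a b c by simp
        next
          case 4
          then have i1: "i + 1 < n" using j by simp
          have a: "M $$ (i,j) = -1" using Mi 4 by simp
          have b: "(if i + 1 < n then M $$ (i+1, j) else 0) = -1" using Mn[OF i1] i1 4 by simp
          have c: "W $$ (i,j) = 0" using Wij 4 by simp
          show ?thesis unfolding a b c by simp
        qed
      qed
      finally have fin: "row W i \<bullet> col M j = real (n - (i + 1)) * W $$ (i,j)" .
      have "(real (n - (i + 1)) \<cdot>\<^sub>v row W i) $ j = real (n - (i + 1)) * W $$ (i,j)"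
        using that j Wdim by simp
      then show "vec n (\<lambda>j. row W i \<bullet> col M j) $ j = (real (n - (i + 1)) \<cdot>\<^sub>v row W i) $ j"
        using j fin by simp
    qed (use Wdim in simp)
  qed
  have "permutation_mat n P" unfolding permutation_mat_def P_def using pp by blast
  moreover have "\<forall>i<n. left_eigenvector (transpose_mat P * L * P) (row W i) (real (n - (i + 1)))"
    using eig unfolding M_def by blast
  ultimately show ?thesis using VW WV by blast
qed

end
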